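(* Let $f\in\mathcal H_{(d)}$ be nonzero and $x,y\in\mathbb C^{n+1}$ nonzero. Suppose $\operatorname{rank}Df(x)|_{x^\perp}=n$, $u<1$, and $\mu(f,y)<\infty$. Then \[\mu(f,x)\le\mu(f,y)\Big(\frac{1}{(1-u)^2}+\delta(f,x)\,d_P(x,y)\Big).\]
   Context: $n\ge2$, $(d)=(d_1,\dots,d_n)$, $D=\max_i d_i\ge2$. $\mathcal H_{(d)}$: systems of $n$ homogeneous complex polynomials in $n+1$ variables of degrees $d_i$ with the Bombieri–Weyl inner product $\langle f,g\rangle=\sum_i\sum_{|\alpha|=d_i}\frac{\alpha_0!\cdots\alpha_n!}{d_i!}f_{i,\alpha}\overline{g_{i,\alpha}}$. $x^\perp$ is the Hermitian orthogonal complement of $x$. $\mu(f,x)=\|f\|\,\|(Df(x)|_{x^\perp})^{-1}\mathrm{diag}(\sqrt{d_i}\|x\|^{d_i-1})\|$ (operator norm), $\infty$ if not invertible. $\delta(f,x)=\|x\|^{-1}\|(Df(x)|_{x^\perp})^{-1}\mathrm{diag}(d_i)f(x)\|$. $d_R(x,y)\in[0,\pi/2]$ with $\cos d_R=|\langle x,y\rangle|/(\|x\|\|y\|)$, $d_P=\sin d_R$. $u=\frac{D^{3/2}}{2}\mu(f,x)d_R(x,y)$. *)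

theory Defs
  imports "HOL-Analysis.Analysis"
begin

text \<open>The n equations are indexed by a finite type 'n (so n = CARD('n)),
the n+1 variables by 'n option (CARD('n option) = n+1). Points of C^(n+1) are
vectors of type complex^'n option. A homogeneous polynomial of degree k in the
n+1 variables is given by its coefficients on multi-indices alpha :: 'n option => nat
with total degree k. A system f in H_(d) is a coefficient function
f :: 'n => ('n option => nat) => complex vanishing outside the admissible monomials.\<close>

definition mindex :: "nat \<Rightarrow> ('v::finite \<Rightarrow> nat) set" where
  "mindex k = {\<alpha>. (\<Sum>j\<in>UNIV. \<alpha> j) = k}"

definition Hd :: "('n::finite \<Rightarrow> nat) \<Rightarrow> ('n \<Rightarrow> ('n option \<Rightarrow> nat) \<Rightarrow> complex) set" where
  "Hd d = {f. \<forall>i \<alpha>. \<alpha> \<notin> mindex (d i) \<longrightarrow> f i \<alpha> = 0}"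

definition monom_eval :: "('v::finite \<Rightarrow> nat) \<Rightarrow> complex^'v \<Rightarrow> complex" where
  "monom_eval \<alpha> x = (\<Prod>j\<in>UNIV. (x $ j) ^ \<alpha> j)"

definition peval :: "('n::finite \<Rightarrow> nat) \<Rightarrow> ('n \<Rightarrow> ('n option \<Rightarrow> nat) \<Rightarrow> complex)
    \<Rightarrow> complex^'n option \<Rightarrow> complex^'n" where
  "peval d f x = (\<chi> i. \<Sum>\<alpha>\<in>mindex (d i). f i \<alpha> * monom_eval \<alpha> x)"

definition bw_norm :: "('n::finite \<Rightarrow> nat) \<Rightarrow> ('n \<Rightarrow> ('n option \<Rightarrow> nat) \<Rightarrow> complex) \<Rightarrow> real" where
  "bw_norm d f = sqrt (\<Sum>i\<in>UNIV. \<Sum>\<alpha>\<in>mindex (d i).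
      (\<Prod>j\<in>UNIV. fact (\<alpha> j)) / fact (d i) * (cmod (f i \<alpha>))\<^sup>2)"

definition Df :: "('n::finite \<Rightarrow> nat) \<Rightarrow> ('n \<Rightarrow> ('n option \<Rightarrow> nat) \<Rightarrow> complex)
    \<Rightarrow> complex^'n option \<Rightarrow> complex^'n option \<Rightarrow> complex^'n" where
  "Df d f x = frechet_derivative (peval d f) (at x)"

definition hinner :: "complex^'v::finite \<Rightarrow> complex^'v \<Rightarrow> complex" where
  "hinner x y = (\<Sum>j\<in>UNIV. x $ j * cnj (y $ j))"

definition hperp :: "complex^'v::finite \<Rightarrow> (complex^'v) set" where
  "hperp x = {v. hinner v x = 0}"

text \<open>Complex rank of a (complex-linear) map L restricted to a complex subspace S:
the complex dimension of L ` S, i.e. half its real dimension.\<close>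
definition crank :: "('a::euclidean_space \<Rightarrow> 'b::euclidean_space) \<Rightarrow> 'a set \<Rightarrow> nat" where
  "crank L S = dim (L ` S) div 2"

definition restr_invertible :: "('n::finite \<Rightarrow> nat) \<Rightarrow> ('n \<Rightarrow> ('n option \<Rightarrow> nat) \<Rightarrow> complex)
    \<Rightarrow> complex^'n option \<Rightarrow> bool" where
  "restr_invertible d f x = bij_betw (Df d f x) (hperp x) UNIV"

definition restr_inv :: "('n::finite \<Rightarrow> nat) \<Rightarrow> ('n \<Rightarrow> ('n option \<Rightarrow> nat) \<Rightarrow> complex)
    \<Rightarrow> complex^'n option \<Rightarrow> complex^'n \<Rightarrow> complex^'n option" where
  "restr_inv d f x = inv_into (hperp x) (Df d f x)"

definition mu :: "('n::finite \<Rightarrow> nat) \<Rightarrow> ('n \<Rightarrow> ('n option \<Rightarrow> nat) \<Rightarrow> complex)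
    \<Rightarrow> complex^'n option \<Rightarrow> ereal" where
  "mu d f x = (if restr_invertible d f x
     then ereal (bw_norm d f * onorm (\<lambda>w. restr_inv d f x
             (\<chi> i. complex_of_real (sqrt (real (d i)) * norm x powr (real (d i) - 1)) * w $ i)))
     else \<infinity>)"

definition delta :: "('n::finite \<Rightarrow> nat) \<Rightarrow> ('n \<Rightarrow> ('n option \<Rightarrow> nat) \<Rightarrow> complex)
    \<Rightarrow> complex^'n option \<Rightarrow> real" where
  "delta d f x = inverse (norm x) *
     norm (restr_inv d f x (\<chi> i. of_nat (d i) * peval d f x $ i))"

definition dR :: "complex^'v::finite \<Rightarrow> complex^'v \<Rightarrow> real" where
  "dR x y = arccos (cmod (hinner x y) / (norm x * norm y))"

definition dP :: "complex^'v::finite \<Rightarrow> complex^'v \<Rightarrow> real" where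
  "dP x y = sin (dR x y)"

end

theory Submission
  imports Defs "HOL-Combinatorics.Multiset_Permutations"
begin
definition Ls :: "nat \<Rightarrow> ('v::finite) list set" where
  "Ls k = {xs. length xs = k}"

lemma finite_Ls[simp]: "finite (Ls k)"
proof -
  have "Ls k = {xs. set xs \<subseteq> UNIV \<and> length xs = k}" by (auto simp: Ls_def)
  thus ?thesis using finite_lists_length_eq[of "UNIV::'a set" k] by (simp add: Ls_def)
qed

lemma sum_Ls_prod:
  fixes g :: "nat \<Rightarrow> 'v::finite \<Rightarrow> 'a::comm_semiring_1"
  shows "(\<Sum>xs\<in>Ls k. \<Prod>j<k. g j (xs!j)) = (\<Prod>j<k. \<Sum>v\<in>UNIV. g j v)"
proof (induction k arbitrary: g)
  case 0
  then show ?case by (simp add: Ls_def)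
next
  case (Suc k)
  have e: "Ls (Suc k) = (\<lambda>(xs, n). n#xs) ` (Ls k \<times> (UNIV::'v set))"
    using lists_length_Suc_eq[of "UNIV::'v set" k] by (simp add: Ls_def)
  have inj: "inj_on (\<lambda>(xs, n). n#xs) (Ls k \<times> (UNIV::'v set))"
    by (auto simp: inj_on_def)
  have "(\<Sum>xs\<in>Ls (Suc k). \<Prod>j<Suc k. g j (xs!j))
      = (\<Sum>(xs,n)\<in>Ls k \<times> UNIV. \<Prod>j<Suc k. g j ((n#xs)!j))"
    unfolding e by (subst sum.reindex[OF inj]) (simp add: case_prod_unfold)
  also have "\<dots> = (\<Sum>(xs,n)\<in>Ls k \<times> UNIV. g 0 n * (\<Prod>j<k. g (Suc j) (xs!j)))"
    by (simp only: prod.lessThan_Suc_shift nth_Cons_0 nth_Cons_Suc)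
  also have "\<dots> = (\<Sum>xs\<in>Ls k. \<Sum>n\<in>UNIV. g 0 n * (\<Prod>j<k. g (Suc j) (xs!j)))"
    by (simp add: sum.cartesian_product)
  also have "\<dots> = (\<Sum>n\<in>UNIV. g 0 n) * (\<Sum>xs\<in>Ls k. (\<Prod>j<k. g (Suc j) (xs!j)))"
    by (simp add: sum_distrib_left sum_distrib_right sum.swap[of _ "Ls k"])
  also have "\<dots> = (\<Sum>n\<in>UNIV. g 0 n) * (\<Prod>j<k. \<Sum>v\<in>UNIV. g (Suc j) v)"
    using Suc.IH[of "\<lambda>j. g (Suc j)"] by simp
  also have "\<dots> = (\<Prod>j<Suc k. \<Sum>v\<in>UNIV. g j v)"
    by (simp only: prod.lessThan_Suc_shift)
  finally show ?case .
qed

definition ms :: "'v list \<Rightarrow> 'v \<Rightarrow> nat" where "ms xs = count (mset xs)"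

lemma prod_list_pos:
  fixes x :: "'v::finite \<Rightarrow> 'a::comm_monoid_mult"
  shows "(\<Prod>j<length xs. x (xs!j)) = (\<Prod>v\<in>UNIV. x v ^ ms xs v)"
proof (induction xs)
  case Nil
  then show ?case by (simp add: ms_def)
next
  case (Cons a xs)
  have "(\<Prod>v\<in>UNIV. x v ^ ms (a#xs) v) = (\<Prod>v\<in>UNIV. x v ^ ms xs v * (if v = a then x v else 1))"
    by (intro prod.cong) (auto simp: ms_def mult.commute)
  also have "\<dots> = (\<Prod>v\<in>UNIV. x v ^ ms xs v) * x a"
    by (simp add: prod.distrib prod.delta mult.commute)
  finally have "(\<Prod>v\<in>UNIV. x v ^ ms (a#xs) v) = (\<Prod>v\<in>UNIV. x v ^ ms xs v) * x a" .
  moreover have "(\<Prod>j<length (a#xs). x ((a#xs)!j)) = x a * (\<Prod>j<length xs. x (xs!j))"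
    by (simp only: length_Cons prod.lessThan_Suc_shift nth_Cons_0 nth_Cons_Suc)
  ultimately show ?case using Cons by (simp add: mult.commute)
qed

lemma sum_ms: "(\<Sum>v\<in>(UNIV::'v::finite set). ms xs v) = length xs"
proof (induction xs)
  case Nil then show ?case by (simp add: ms_def)
next
  case (Cons a xs)
  have "(\<Sum>v\<in>(UNIV::'v set). ms (a#xs) v) = (\<Sum>v\<in>UNIV. ms xs v + (if v = a then 1 else 0))"
    by (intro sum.cong) (auto simp: ms_def)
  then show ?case using Cons by (simp add: sum.distrib)
qed

lemma ms_eq_iff: "ms xs = ms ys \<longleftrightarrow> mset xs = mset ys"
  by (simp add: ms_def multiset_eq_iff fun_eq_iff)

definition Nm :: "('v \<Rightarrow> nat) \<Rightarrow> nat" where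
  "Nm a = card {ys. ms ys = a}"

lemma ms_in_mindex: "length xs = k \<Longrightarrow> ms (xs::'v::finite list) \<in> mindex k"
  by (simp add: mindex_def sum_ms)

lemma mindex_surj:
  assumes "(a::'v::finite \<Rightarrow> nat) \<in> mindex k"
  shows "\<exists>xs. ms xs = a \<and> length xs = k"
proof -
  have fin: "finite {x. a x > 0}" by simp
  obtain xs where xs: "mset xs = Abs_multiset a" using ex_mset by blast
  have "ms xs = a" using count_Abs_multiset[OF fin] xs by (simp add: ms_def)
  moreover have "length xs = k" using sum_ms[of xs] assms \<open>ms xs = a\<close> by (simp add: mindex_def)
  ultimately show ?thesis by blast
qed

lemma fiber_eq:
  assumes "length xs = k"
  shows "{ys \<in> Ls k. ms ys = ms xs} = {ys. ms ys = ms (xs::'v::finite list)}"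
proof -
  have "ms ys = ms xs \<Longrightarrow> length ys = k" for ys
    using assms by (metis ms_eq_iff size_mset)
  thus ?thesis by (auto simp: Ls_def)
qed

lemma Nm_pos:
  assumes "length xs = k"
  shows "Nm (ms (xs::'v::finite list)) > 0"
proof -
  have "{ys. ms ys = ms xs} = {ys \<in> Ls k. ms ys = ms xs}" using fiber_eq[OF assms] by simp
  moreover have "finite {ys \<in> Ls k. ms ys = ms xs}" by simp
  ultimately show ?thesis unfolding Nm_def by (metis (mono_tags, lifting) card_gt_0_iff empty_iff mem_Collect_eq)
qed

lemma regroup:
  fixes h :: "('v::finite \<Rightarrow> nat) \<Rightarrow> 'b::field_char_0"
  shows "(\<Sum>xs\<in>Ls k. h (ms xs) / of_nat (Nm (ms xs))) = (\<Sum>a\<in>mindex k. h a)"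
proof -
  have finM: "finite (mindex k :: ('v \<Rightarrow> nat) set)"
  proof -
    have "mindex k \<subseteq> ms ` (Ls k :: 'v list set)"
      using mindex_surj by (fastforce simp: Ls_def)
    thus ?thesis by (rule finite_surj[OF finite_Ls])
  qed
  have sub: "ms ` Ls k \<subseteq> (mindex k :: ('v \<Rightarrow> nat) set)"
    using ms_in_mindex by (auto simp: Ls_def)
  have "(\<Sum>xs\<in>Ls k. h (ms xs) / of_nat (Nm (ms xs)))
      = (\<Sum>a\<in>mindex k. \<Sum>xs\<in>{xs \<in> Ls k. ms xs = a}. h (ms xs) / of_nat (Nm (ms xs)))"
    by (rule sum.group[OF finite_Ls finM sub, symmetric])
  also have "\<dots> = (\<Sum>a\<in>mindex k. h a)"
  proof (rule sum.cong[OF refl])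
    fix a :: "'v \<Rightarrow> nat" assume a: "a \<in> mindex k"
    obtain xs0 where xs0: "ms xs0 = a" "length xs0 = k" using mindex_surj[OF a] by blast
    have F: "{xs \<in> (Ls k :: 'v list set). ms xs = a} = {ys. ms ys = a}" using fiber_eq[OF xs0(2)] xs0(1) by simp
    have pos: "Nm a > 0" using Nm_pos[OF xs0(2)] xs0(1) by simp
    have "(\<Sum>xs\<in>{xs \<in> (Ls k :: 'v list set). ms xs = a}. h (ms xs) / of_nat (Nm (ms xs)))
        = (\<Sum>xs\<in>{xs \<in> (Ls k :: 'v list set). ms xs = a}. h a / of_nat (Nm a))" by (intro sum.cong) auto
    also have "\<dots> = of_nat (Nm a) * (h a / of_nat (Nm a))" by (simp add: F Nm_def)
    also have "\<dots> = h a" using pos by simp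
    finally show "(\<Sum>xs\<in>{xs \<in> (Ls k :: 'v list set). ms xs = a}. h (ms xs) / of_nat (Nm (ms xs))) = h a" .
  qed
  finally show ?thesis .
qed

lemma Nm_formula:
  assumes "(a::'v::finite \<Rightarrow> nat) \<in> mindex k"
  shows "real (Nm a) * (\<Prod>v\<in>UNIV. fact (a v)) = fact k"
proof -
  obtain xs0 where xs0: "ms xs0 = a" "length xs0 = k" using mindex_surj[OF assms] by blast
  let ?A = "mset xs0"
  have P: "{ys. ms ys = a} = permutations_of_multiset ?A"
    using xs0 by (auto simp: permutations_of_multiset_def ms_eq_iff)
  have "(\<Prod>x\<in>set_mset ?A. fact (count ?A x)) = (\<Prod>v\<in>UNIV. fact (count ?A v) :: nat)"
    by (intro prod.mono_neutral_left) (auto, metis count_mset_0_iff fact_0 One_nat_def)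
  also have "\<dots> = (\<Prod>v\<in>UNIV. fact (a v))" using xs0(1) by (simp add: ms_def)
  finally have "(\<Prod>x\<in>set_mset ?A. fact (count ?A x)) = (\<Prod>v\<in>UNIV. fact (a v) :: nat)" .
  with card_permutations_of_multiset_aux[of ?A] P xs0
  have "Nm a * (\<Prod>v\<in>UNIV. fact (a v) :: nat) = fact k" by (simp add: Nm_def)
  hence "real (Nm a * (\<Prod>v\<in>UNIV. fact (a v) :: nat)) = real (fact k)" by simp
  thus ?thesis by (simp add: of_nat_prod)
qed

definition Tt :: "(('v::finite \<Rightarrow> nat) \<Rightarrow> complex) \<Rightarrow> 'v list \<Rightarrow> complex" where
  "Tt c xs = c (ms xs) / of_nat (Nm (ms xs))"

definition Mlin :: "nat \<Rightarrow> (('v::finite \<Rightarrow> nat) \<Rightarrow> complex) \<Rightarrow> (nat \<Rightarrow> complex^'v) \<Rightarrow> complex" where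
  "Mlin k c w = (\<Sum>xs\<in>Ls k. Tt c xs * (\<Prod>j<k. w j $ (xs!j)))"

definition bwi :: "nat \<Rightarrow> (('v::finite \<Rightarrow> nat) \<Rightarrow> complex) \<Rightarrow> real" where
  "bwi k c = sqrt (\<Sum>a\<in>mindex k. (\<Prod>j\<in>UNIV. fact (a j)) / fact k * (cmod (c a))\<^sup>2)"

lemma Mlin_const:
  fixes x :: "complex^'v::finite"
  shows "Mlin k c (\<lambda>_. x) = (\<Sum>a\<in>mindex k. c a * monom_eval a x)"
proof -
  have "Mlin k c (\<lambda>_. x) = (\<Sum>xs\<in>Ls k. (c (ms xs) * monom_eval (ms xs) x) / of_nat (Nm (ms xs)))"
    unfolding Mlin_def Tt_def
  proof (intro sum.cong refl)
    fix xs :: "'v list" assume "xs \<in> Ls k"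
    hence "(\<Prod>j<k. x $ (xs!j)) = monom_eval (ms xs) x"
      using prod_list_pos[of "\<lambda>v. x $ v" xs] by (simp add: Ls_def monom_eval_def)
    thus "c (ms xs) / of_nat (Nm (ms xs)) * (\<Prod>j<k. x $ (xs!j)) = c (ms xs) * monom_eval (ms xs) x / of_nat (Nm (ms xs))"
      by simp
  qed
  also have "\<dots> = (\<Sum>a\<in>mindex k. c a * monom_eval a x)"
    by (rule regroup)
  finally show ?thesis .
qed

lemma bwi_nonneg: "bwi k c \<ge> 0"
  unfolding bwi_def by (intro real_sqrt_ge_zero sum_nonneg mult_nonneg_nonneg divide_nonneg_nonneg prod_nonneg) auto

lemma T_norm:
  fixes c :: "('v::finite \<Rightarrow> nat) \<Rightarrow> complex"
  shows "(\<Sum>xs\<in>Ls k. (cmod (Tt c xs))\<^sup>2) = (bwi k c)\<^sup>2"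
proof -
  have "(\<Sum>xs\<in>Ls k. (cmod (Tt c xs))\<^sup>2) = (\<Sum>xs\<in>Ls k. ((cmod (c (ms xs)))\<^sup>2 / real (Nm (ms xs))) / real (Nm (ms xs)))"
    by (intro sum.cong refl) (simp add: Tt_def norm_divide power2_eq_square)
  also have "\<dots> = (\<Sum>a\<in>mindex k. (cmod (c a))\<^sup>2 / real (Nm a))"
    using regroup[where h="\<lambda>a. (cmod (c a))\<^sup>2 / real (Nm a)" and k=k] by simp
  also have "\<dots> = (\<Sum>a\<in>mindex k. (\<Prod>j\<in>UNIV. fact (a j)) / fact k * (cmod (c a))\<^sup>2)"
  proof (intro sum.cong refl)
    fix a :: "'v \<Rightarrow> nat" assume a: "a \<in> mindex k"
    have N: "real (Nm a) * (\<Prod>v\<in>UNIV. fact (a v)) = fact k" by (rule Nm_formula[OF a])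
    have "real (Nm a) \<noteq> 0" using N by (metis fact_nonzero mult_zero_left)
    thus "(cmod (c a))\<^sup>2 / real (Nm a) = (\<Prod>j\<in>UNIV. fact (a j)) / fact k * (cmod (c a))\<^sup>2"
      by (simp add: N[symmetric] field_simps)
  qed
  also have "\<dots> = (bwi k c)\<^sup>2"
    unfolding bwi_def by (subst real_sqrt_pow2) (auto intro!: sum_nonneg mult_nonneg_nonneg divide_nonneg_nonneg prod_nonneg)
  finally show ?thesis .
qed

lemma norm_vec_sq: "(norm (x::complex^'v::finite))\<^sup>2 = (\<Sum>v\<in>UNIV. (cmod (x $ v))\<^sup>2)"
  unfolding norm_vec_def L2_set_def by (subst real_sqrt_pow2) (auto intro!: sum_nonneg)

lemma sum_le_sqrt:
  fixes a b :: "'a \<Rightarrow> real"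
  assumes "\<And>i. a i \<ge> 0" "\<And>i. b i \<ge> 0"
  shows "(\<Sum>i\<in>I. a i * b i) \<le> sqrt (\<Sum>i\<in>I. (a i)\<^sup>2) * sqrt (\<Sum>i\<in>I. (b i)\<^sup>2)"
proof -
  have "(\<Sum>i\<in>I. a i * b i)\<^sup>2 \<le> (\<Sum>i\<in>I. (a i)\<^sup>2) * (\<Sum>i\<in>I. (b i)\<^sup>2)"
    by (rule Cauchy_Schwarz_ineq_sum)
  hence "(\<Sum>i\<in>I. a i * b i) \<le> sqrt ((\<Sum>i\<in>I. (a i)\<^sup>2) * (\<Sum>i\<in>I. (b i)\<^sup>2))"
    by (rule real_le_rsqrt)
  thus ?thesis by (simp add: real_sqrt_mult)
qed

lemma Mlin_bound: "cmod (Mlin k c w) \<le> bwi k c * (\<Prod>j<k. norm (w j))"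
proof -
  have "cmod (Mlin k c w) \<le> (\<Sum>xs\<in>Ls k. cmod (Tt c xs) * cmod (\<Prod>j<k. w j $ (xs!j)))"
    unfolding Mlin_def by (rule order_trans[OF norm_sum]) (simp add: norm_mult)
  also have "\<dots> \<le> sqrt (\<Sum>xs\<in>Ls k. (cmod (Tt c xs))\<^sup>2) * sqrt (\<Sum>xs\<in>Ls k. (cmod (\<Prod>j<k. w j $ (xs!j)))\<^sup>2)"
    by (rule sum_le_sqrt) auto
  also have "(\<Sum>xs\<in>Ls k. (cmod (\<Prod>j<k. w j $ (xs!j)))\<^sup>2) = (\<Sum>xs\<in>Ls k. \<Prod>j<k. (cmod (w j $ (xs!j)))\<^sup>2)"
    by (simp add: prod_norm[symmetric] prod_power_distrib)
  also have "\<dots> = (\<Prod>j<k. \<Sum>v\<in>UNIV. (cmod (w j $ v))\<^sup>2)"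
    by (rule sum_Ls_prod)
  also have "\<dots> = (\<Prod>j<k. norm (w j))\<^sup>2"
    by (simp add: norm_vec_sq prod_power_distrib)
  also have "sqrt ((\<Prod>j<k. norm (w j))\<^sup>2) = (\<Prod>j<k. norm (w j))"
    by (simp add: prod_nonneg)
  also have "sqrt (\<Sum>xs\<in>Ls k. (cmod (Tt c xs))\<^sup>2) = bwi k c"
    by (simp add: T_norm bwi_nonneg)
  finally show ?thesis .
qed

definition DRow :: "nat \<Rightarrow> (('v::finite \<Rightarrow> nat) \<Rightarrow> complex) \<Rightarrow> complex^'v \<Rightarrow> complex^'v \<Rightarrow> complex" where
  "DRow k c x h = (\<Sum>m<k. Mlin k c (\<lambda>j. if j = m then h else x))"

lemma prod_sel:
  fixes h x :: "complex^'v::finite"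
  assumes "m < k"
  shows "(\<Prod>j<k. (if j = m then h else x) $ (xs!j)) = h $ (xs!m) * (\<Prod>j\<in>{..<k}-{m}. x $ (xs!j))"
proof -
  have "(\<Prod>j<k. (if j = m then h else x) $ (xs!j)) = (if m = m then h else x) $ (xs!m) * (\<Prod>j\<in>{..<k}-{m}. (if j = m then h else x) $ (xs!j))"
    using assms by (subst prod.remove[of "{..<k}" m]) auto
  also have "(\<Prod>j\<in>{..<k}-{m}. (if j = m then h else x) $ (xs!j)) = (\<Prod>j\<in>{..<k}-{m}. x $ (xs!j))"
    by (intro prod.cong) auto
  finally show ?thesis by simp
qed

lemma Mlin_sel:
  fixes h x :: "complex^'v::finite"
  assumes "m < k"
  shows "Mlin k c (\<lambda>j. if j = m then h else x) = (\<Sum>xs\<in>Ls k. Tt c xs * (h $ (xs!m) * (\<Prod>j\<in>{..<k}-{m}. x $ (xs!j))))"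
  unfolding Mlin_def by (intro sum.cong refl) (simp only: prod_sel[OF assms])

lemma Mlin_deriv:
  fixes x :: "complex^'v::finite"
  shows "((\<lambda>x. Mlin k c (\<lambda>_. x)) has_derivative DRow k c x) (at x)"
proof -
  have P: "((\<lambda>x. \<Prod>j<k. x $ (xs!j)) has_derivative
      (\<lambda>h. \<Sum>i<k. h $ (xs!i) * (\<Prod>j\<in>{..<k}-{i}. x $ (xs!j)))) (at x)" for xs :: "'v list"
    by (rule has_derivative_prod) (rule bounded_linear_imp_has_derivative[OF bounded_linear_vec_nth])
  have D: "((\<lambda>x. \<Sum>xs\<in>Ls k. Tt c xs * (\<Prod>j<k. x $ (xs!j))) has_derivative
      (\<lambda>h. \<Sum>xs\<in>Ls k. Tt c xs * (\<Sum>i<k. h $ (xs!i) * (\<Prod>j\<in>{..<k}-{i}. x $ (xs!j))))) (at x)"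
    by (intro has_derivative_sum has_derivative_mult_right P)
  have E: "(\<lambda>h. \<Sum>xs\<in>Ls k. Tt c xs * (\<Sum>i<k. h $ (xs!i) * (\<Prod>j\<in>{..<k}-{i}. x $ (xs!j)))) = DRow k c x"
  proof
    fix h
    have "(\<Sum>xs\<in>Ls k. Tt c xs * (\<Sum>i<k. h $ (xs!i) * (\<Prod>j\<in>{..<k}-{i}. x $ (xs!j))))
        = (\<Sum>i<k. \<Sum>xs\<in>Ls k. Tt c xs * (h $ (xs!i) * (\<Prod>j\<in>{..<k}-{i}. x $ (xs!j))))"
      by (simp add: sum_distrib_left sum.swap[of _ "Ls k"])
    also have "\<dots> = DRow k c x h"
      unfolding DRow_def by (intro sum.cong refl) (simp add: Mlin_sel)
    finally show "(\<Sum>xs\<in>Ls k. Tt c xs * (\<Sum>i<k. h $ (xs!i) * (\<Prod>j\<in>{..<k}-{i}. x $ (xs!j)))) = DRow k c x h" .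
  qed
  show ?thesis using D unfolding E Mlin_def .
qed

lemma bounded_linear_axis: "bounded_linear (axis i :: complex \<Rightarrow> complex^'n::finite)"
proof -
  have "linear (axis i :: complex \<Rightarrow> complex^'n)"
    by (rule linearI) (auto simp: axis_def vec_eq_iff)
  thus ?thesis by (simp add: linear_conv_bounded_linear)
qed

lemma vec_as_axis_sum: "(\<chi> i. g i) = (\<Sum>i\<in>UNIV. axis i (g i) :: complex^'n::finite)"
  by (simp add: vec_eq_iff axis_def sum_component if_distrib sum.delta cong: if_cong)

lemma has_derivative_vec:
  fixes g :: "'n::finite \<Rightarrow> 'a::real_normed_vector \<Rightarrow> complex"
  assumes "\<And>i. (g i has_derivative g' i) (at x)"
  shows "((\<lambda>x. \<chi> i. g i x) has_derivative (\<lambda>h. \<chi> i. g' i h)) (at x)"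
proof -
  have "((\<lambda>x. \<Sum>i\<in>UNIV. axis i (g i x) :: complex^'n) has_derivative (\<lambda>h. \<Sum>i\<in>UNIV. axis i (g' i h))) (at x)"
    by (intro has_derivative_sum bounded_linear.has_derivative[OF bounded_linear_axis] assms)
  thus ?thesis by (simp only: vec_as_axis_sum)
qed

lemma peval_Mlin: "peval d f x = (\<chi> i. Mlin (d i) (f i) (\<lambda>_. x))"
  by (simp add: peval_def Mlin_const)

lemma Df_eq: "Df d f x = (\<lambda>h. \<chi> i. DRow (d i) (f i) x h)"
proof -
  have "(peval d f has_derivative (\<lambda>h. \<chi> i. DRow (d i) (f i) x h)) (at x)"
    unfolding peval_Mlin[abs_def] by (intro has_derivative_vec Mlin_deriv)
  thus ?thesis unfolding Df_def by (rule frechet_derivative_at[symmetric])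
qed

lemma DRow_sel_form:
  fixes h x :: "complex^'v::finite"
  shows "DRow k c x h = (\<Sum>m<k. \<Sum>xs\<in>Ls k. Tt c xs * (h $ (xs!m) * (\<Prod>j\<in>{..<k}-{m}. x $ (xs!j))))"
  unfolding DRow_def by (intro sum.cong refl) (simp add: Mlin_sel)

lemma DRow_add: "DRow k c x (h1 + h2) = DRow k c x h1 + DRow k c x h2"
  unfolding DRow_sel_form by (simp add: algebra_simps sum.distrib)

lemma DRow_smult: "DRow k c x (a *s h) = a * DRow k c x h"
  unfolding DRow_sel_form by (simp add: algebra_simps sum_distrib_left)

lemma DRow_euler: "DRow k c x x = of_nat k * Mlin k c (\<lambda>_. x)"
  unfolding DRow_def by simp

lemma card_A: "m < k \<Longrightarrow> card ({..<k}-{m}) = k - 1"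
  by simp

lemma DRow_homog: "DRow k c (a *s x) h = a ^ (k - 1) * DRow k c x h"
proof -
  have "(\<Prod>j\<in>{..<k}-{m}. (a *s x) $ (xs!j)) = a ^ (k - 1) * (\<Prod>j\<in>{..<k}-{m}. x $ (xs!j))"
    if "m < k" for m and xs :: "'a list"
    using that by (simp add: prod.distrib)
  thus ?thesis unfolding DRow_sel_form
    by (simp add: sum_distrib_left algebra_simps)
qed

lemma prod_split3:
  fixes g :: "nat \<Rightarrow> 'a::comm_monoid_mult"
  assumes "m < k" "S \<subseteq> {..<k}-{m}"
  shows "(\<Prod>j<k. g j) = g m * (\<Prod>j\<in>S. g j) * (\<Prod>j\<in>({..<k}-{m})-S. g j)"
proof -
  have "(\<Prod>j<k. g j) = g m * (\<Prod>j\<in>{..<k}-{m}. g j)"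
    using assms(1) by (subst prod.remove[of "{..<k}" m]) auto
  also have "(\<Prod>j\<in>{..<k}-{m}. g j) = (\<Prod>j\<in>({..<k}-{m})-S. g j) * (\<Prod>j\<in>S. g j)"
    using assms(2) by (intro prod.subset_diff) auto
  finally show ?thesis by (simp add: ac_simps)
qed

lemma Mlin_sel_bound:
  fixes h x :: "complex^'v::finite"
  assumes "m < k"
  shows "cmod (Mlin k c (\<lambda>j. if j = m then h else x)) \<le> bwi k c * (norm h * norm x ^ (k - 1))"
proof -
  have "(\<Prod>j<k. norm (if j = m then h else x)) = norm (if m = m then h else x) * (\<Prod>j\<in>{..<k}-{m}. norm (if j = m then h else x))"
    using assms by (subst prod.remove[of "{..<k}" m]) auto
  also have "(\<Prod>j\<in>{..<k}-{m}. norm (if j = m then h else x)) = (\<Prod>j\<in>{..<k}-{m}. norm x)"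
    by (intro prod.cong) auto
  finally have "(\<Prod>j<k. norm (if j = m then h else x)) = norm h * norm x ^ (k - 1)"
    using assms by simp
  thus ?thesis using Mlin_bound[of k c "\<lambda>j. if j = m then h else x"] by simp
qed

lemma DRow_bound: "cmod (DRow k c x h) \<le> real k * bwi k c * norm x ^ (k - 1) * norm h"
proof -
  have "cmod (DRow k c x h) \<le> (\<Sum>m<k. cmod (Mlin k c (\<lambda>j. if j = m then h else x)))"
    unfolding DRow_def by (rule norm_sum)
  also have "\<dots> \<le> (\<Sum>m<k. bwi k c * (norm h * norm x ^ (k - 1)))"
    by (intro sum_mono Mlin_sel_bound) auto
  finally show ?thesis by (simp add: ac_simps)
qed

definition wS :: "nat \<Rightarrow> 'a \<Rightarrow> 'a \<Rightarrow> 'a \<Rightarrow> nat set \<Rightarrow> nat \<Rightarrow> 'a" where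
  "wS m z e x S = (\<lambda>j. if j = m then z else if j \<in> S then e else x)"

lemma Mlin_expand:
  fixes z x e :: "complex^'v::finite"
  assumes "m < k"
  shows "Mlin k c (\<lambda>j. if j = m then z else x + e) = (\<Sum>S\<in>Pow ({..<k}-{m}). Mlin k c (wS m z e x S))"
proof -
  let ?A = "{..<k}-{m}"
  have "Mlin k c (\<lambda>j. if j = m then z else x + e) = (\<Sum>xs\<in>Ls k. Tt c xs * (z $ (xs!m) * (\<Prod>j\<in>?A. e $ (xs!j) + x $ (xs!j))))"
    unfolding Mlin_sel[OF assms] by (simp add: add.commute)
  also have "\<dots> = (\<Sum>xs\<in>Ls k. \<Sum>S\<in>Pow ?A. Tt c xs * (z $ (xs!m) * ((\<Prod>j\<in>S. e $ (xs!j)) * (\<Prod>j\<in>?A-S. x $ (xs!j)))))"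
    by (simp add: prod_add sum_distrib_left)
  also have "\<dots> = (\<Sum>S\<in>Pow ?A. \<Sum>xs\<in>Ls k. Tt c xs * (z $ (xs!m) * ((\<Prod>j\<in>S. e $ (xs!j)) * (\<Prod>j\<in>?A-S. x $ (xs!j)))))"
    by (rule sum.swap)
  also have "\<dots> = (\<Sum>S\<in>Pow ?A. Mlin k c (wS m z e x S))"
  proof (intro sum.cong refl)
    fix S assume S: "S \<in> Pow ?A"
    show "(\<Sum>xs\<in>Ls k. Tt c xs * (z $ (xs!m) * ((\<Prod>j\<in>S. e $ (xs!j)) * (\<Prod>j\<in>?A-S. x $ (xs!j))))) = Mlin k c (wS m z e x S)"
      unfolding Mlin_def
    proof (intro sum.cong refl)
      fix xs :: "'v list"
      have "(\<Prod>j<k. wS m z e x S j $ (xs!j)) = wS m z e x S m $ (xs!m) * (\<Prod>j\<in>S. wS m z e x S j $ (xs!j)) * (\<Prod>j\<in>?A-S. wS m z e x S j $ (xs!j))"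
        using S assms by (intro prod_split3) auto
      also have "(\<Prod>j\<in>S. wS m z e x S j $ (xs!j)) = (\<Prod>j\<in>S. e $ (xs!j))"
        using S by (intro prod.cong) (auto simp: wS_def)
      also have "(\<Prod>j\<in>?A-S. wS m z e x S j $ (xs!j)) = (\<Prod>j\<in>?A-S. x $ (xs!j))"
        by (intro prod.cong) (auto simp: wS_def)
      finally show "Tt c xs * (z $ (xs!m) * ((\<Prod>j\<in>S. e $ (xs!j)) * (\<Prod>j\<in>?A-S. x $ (xs!j)))) = Tt c xs * (\<Prod>j<k. wS m z e x S j $ (xs!j))"
        by (simp add: wS_def ac_simps)
    qed
  qed
  finally show ?thesis .
qed

lemma Mlin_wS_bound:
  fixes z x e :: "complex^'v::finite"
  assumes "m < k" "S \<subseteq> {..<k}-{m}"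
  shows "cmod (Mlin k c (wS m z e x S)) \<le> bwi k c * (norm z * ((\<Prod>j\<in>S. norm e) * (\<Prod>j\<in>({..<k}-{m})-S. norm x)))"
proof -
  have "(\<Prod>j<k. norm (wS m z e x S j)) = norm (wS m z e x S m) * (\<Prod>j\<in>S. norm (wS m z e x S j)) * (\<Prod>j\<in>({..<k}-{m})-S. norm (wS m z e x S j))"
    using assms by (intro prod_split3) auto
  also have "(\<Prod>j\<in>S. norm (wS m z e x S j)) = (\<Prod>j\<in>S. norm e)"
    using assms by (intro prod.cong) (auto simp: wS_def)
  also have "(\<Prod>j\<in>({..<k}-{m})-S. norm (wS m z e x S j)) = (\<Prod>j\<in>({..<k}-{m})-S. norm x)"
    by (intro prod.cong) (auto simp: wS_def)
  finally have "(\<Prod>j<k. norm (wS m z e x S j)) = norm z * ((\<Prod>j\<in>S. norm e) * (\<Prod>j\<in>({..<k}-{m})-S. norm x))"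
    by (simp add: wS_def ac_simps)
  thus ?thesis using Mlin_bound[of k c "wS m z e x S"] by simp
qed

lemma Mlin_diff_bound:
  fixes z x e :: "complex^'v::finite"
  assumes "m < k"
  shows "cmod (Mlin k c (\<lambda>j. if j = m then z else x + e) - Mlin k c (\<lambda>j. if j = m then z else x))
     \<le> bwi k c * norm z * ((norm x + norm e) ^ (k - 1) - norm x ^ (k - 1))"
proof -
  let ?A = "{..<k}-{m}"
  have fin: "finite (Pow ?A)" by simp
  have e0: "Mlin k c (wS m z e x {}) = Mlin k c (\<lambda>j. if j = m then z else x)"
    unfolding wS_def by (rule arg_cong[where f="Mlin k c"]) auto
  have "Mlin k c (\<lambda>j. if j = m then z else x + e) - Mlin k c (\<lambda>j. if j = m then z else x)
      = (\<Sum>S\<in>Pow ?A - {{}}. Mlin k c (wS m z e x S))"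
    unfolding Mlin_expand[OF assms] using sum.remove[OF fin, of "{}" "\<lambda>S. Mlin k c (wS m z e x S)"] e0 by simp
  hence "cmod (Mlin k c (\<lambda>j. if j = m then z else x + e) - Mlin k c (\<lambda>j. if j = m then z else x))
      \<le> (\<Sum>S\<in>Pow ?A - {{}}. cmod (Mlin k c (wS m z e x S)))"
    by (simp add: norm_sum)
  also have "\<dots> \<le> (\<Sum>S\<in>Pow ?A - {{}}. bwi k c * (norm z * ((\<Prod>j\<in>S. norm e) * (\<Prod>j\<in>?A-S. norm x))))"
    by (intro sum_mono Mlin_wS_bound assms) auto
  also have "\<dots> = bwi k c * norm z * (\<Sum>S\<in>Pow ?A - {{}}. (\<Prod>j\<in>S. norm e) * (\<Prod>j\<in>?A-S. norm x))"
    by (simp add: sum_distrib_left ac_simps)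
  also have "(\<Sum>S\<in>Pow ?A - {{}}. (\<Prod>j\<in>S. norm e) * (\<Prod>j\<in>?A-S. norm x))
      = (\<Sum>S\<in>Pow ?A. (\<Prod>j\<in>S. norm e) * (\<Prod>j\<in>?A-S. norm x)) - norm x ^ (k - 1)"
    using sum.remove[OF fin, of "{}" "\<lambda>S. (\<Prod>j\<in>S. norm e) * (\<Prod>j\<in>?A-S. norm x)"] assms by simp
  also have "(\<Sum>S\<in>Pow ?A. (\<Prod>j\<in>S. norm e) * (\<Prod>j\<in>?A-S. norm x)) = (\<Prod>j\<in>?A. norm e + norm x)"
    by (rule prod_add[symmetric]) simp
  also have "\<dots> = (norm x + norm e) ^ (k - 1)"
    using assms by (simp add: add.commute)
  finally show ?thesis by simp
qed

lemma DRow_diff: "cmod (DRow k c (x + e) z - DRow k c x z) \<le> real k * bwi k c * norm z * ((norm x + norm e) ^ (k - 1) - norm x ^ (k - 1))"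
proof -
  have "DRow k c (x + e) z - DRow k c x z = (\<Sum>m<k. Mlin k c (\<lambda>j. if j = m then z else x + e) - Mlin k c (\<lambda>j. if j = m then z else x))"
    unfolding DRow_def by (simp add: sum_subtractf)
  hence "cmod (DRow k c (x + e) z - DRow k c x z) \<le> (\<Sum>m<k. cmod (Mlin k c (\<lambda>j. if j = m then z else x + e) - Mlin k c (\<lambda>j. if j = m then z else x)))"
    by (simp add: norm_sum)
  also have "\<dots> \<le> (\<Sum>m<k. bwi k c * norm z * ((norm x + norm e) ^ (k - 1) - norm x ^ (k - 1)))"
    by (intro sum_mono Mlin_diff_bound) auto
  finally show ?thesis by (simp add: ac_simps)
qed

lemma hinner_add: "hinner (v + w) x = hinner v x + hinner w x"
  by (simp add: hinner_def algebra_simps sum.distrib)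
lemma hinner_diff: "hinner (v - w) x = hinner v x - hinner w x"
  by (simp add: hinner_def algebra_simps sum_subtractf)
lemma hinner_smult: "hinner (a *s v) x = a * hinner v x"
  by (simp add: hinner_def algebra_simps sum_distrib_left)
lemma hinner_scaleR: "hinner (r *\<^sub>R v) x = of_real r * hinner v x"
  unfolding hinner_def vector_scaleR_component by (simp add: scaleR_conv_of_real sum_distrib_left algebra_simps)
lemma hinner_zero[simp]: "hinner 0 x = 0"
  by (simp add: hinner_def)
lemma hinner_self: "hinner x x = of_real ((norm x)\<^sup>2)"
  unfolding hinner_def norm_vec_sq of_real_sum complex_norm_square ..
lemma hinner_cnj: "hinner y x = cnj (hinner x y)"
  by (simp add: hinner_def mult.commute)

lemma subspace_hperp: "subspace (hperp x)"
  unfolding subspace_def hperp_def by (auto simp: hinner_add hinner_scaleR)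

lemma Df_apply: "Df d f x h $ i = DRow (d i) (f i) x h"
  by (simp add: Df_eq)
lemma Df_add: "Df d f x (h1 + h2) = Df d f x h1 + Df d f x h2"
  by (simp add: Df_eq vec_eq_iff DRow_add)
lemma Df_smult: "Df d f x (a *s h) = a *s Df d f x h"
  by (simp add: Df_eq vec_eq_iff DRow_smult)
lemma Df_scaleR: "Df d f x (r *\<^sub>R h) = r *\<^sub>R Df d f x h"
proof -
  have "r *\<^sub>R h = (complex_of_real r) *s h" unfolding vec_eq_iff vector_scaleR_component by (simp add: scaleR_conv_of_real)
  moreover have "r *\<^sub>R Df d f x h = (complex_of_real r) *s Df d f x h" unfolding vec_eq_iff vector_scaleR_component by (simp add: scaleR_conv_of_real)
  ultimately show ?thesis by (simp add: Df_smult)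
qed
lemma Df_linear: "linear (Df d f x)"
  by (rule linearI) (simp_all add: Df_add Df_scaleR)
lemma Df_diff: "Df d f x (h1 - h2) = Df d f x h1 - Df d f x h2"
  using linear_diff[OF Df_linear] by blast
lemma Df_euler: "Df d f x x = (\<chi> i. of_nat (d i) * peval d f x $ i)"
  by (simp add: Df_eq vec_eq_iff DRow_euler peval_Mlin)
lemma Df_homog: "Df d f (a *s y) h $ i = a ^ (d i - 1) * Df d f y h $ i"
  by (simp add: Df_apply DRow_homog)

lemma restr_invertible_from_crank:
  fixes x :: "complex^'n::finite option"
  assumes x: "x \<noteq> 0" and cr: "crank (Df d f x) (hperp x) = CARD('n)"
  shows "restr_invertible d f x"
proof -
  let ?L = "Df d f x"
  have sub: "subspace (?L ` hperp x)"
  proof -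
    have H: "0 \<in> hperp x" "\<And>a b. a \<in> hperp x \<Longrightarrow> b \<in> hperp x \<Longrightarrow> a + b \<in> hperp x"
        "\<And>c a. a \<in> hperp x \<Longrightarrow> c *\<^sub>R a \<in> hperp x"
      using subspace_hperp[of x] unfolding subspace_def by auto
    have "?L 0 = 0" by (rule linear_0[OF Df_linear])
    hence "0 \<in> ?L ` hperp x" using H(1) by (metis imageI)
    moreover have "a + b \<in> ?L ` hperp x" if "a \<in> ?L ` hperp x" "b \<in> ?L ` hperp x" for a b
      using that H(2) by (auto simp: image_iff Df_add[symmetric])
    moreover have "c *\<^sub>R a \<in> ?L ` hperp x" if "a \<in> ?L ` hperp x" for a c
      using that H(3) by (auto simp: image_iff Df_scaleR[symmetric])
    ultimately show ?thesis unfolding subspace_def by blast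
  qed
  have "dim (?L ` hperp x) \<le> DIM(complex^'n)" by (rule dim_subset_UNIV)
  moreover have "dim (?L ` hperp x) div 2 = CARD('n)" using cr by (simp add: crank_def)
  ultimately have "dim (?L ` hperp x) = DIM(complex^'n)" by simp
  hence "span (?L ` hperp x) = UNIV" using dim_eq_full[of "?L ` hperp x"] by (simp only:)
  hence surj: "?L ` hperp x = UNIV" using sub by (metis span_eq_iff)
  define nx where "nx = complex_of_real ((norm x)\<^sup>2)"
  have nx0: "nx \<noteq> 0" using x by (simp add: nx_def)
  define Phi where "Phi v = (\<chi> j. case j of None \<Rightarrow> hinner v x | Some i \<Rightarrow> ?L v $ i)" for v
  have linPhi: "linear Phi"
  proof (rule linearI)
    show "Phi (b1 + b2) = Phi b1 + Phi b2" for b1 b2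
      by (auto simp: Phi_def vec_eq_iff Df_add hinner_add split: option.splits)
    show "Phi (r *\<^sub>R b) = r *\<^sub>R Phi b" for r b
      unfolding vec_eq_iff vector_scaleR_component
    proof
      fix j show "Phi (r *\<^sub>R b) $ j = r *\<^sub>R (Phi b $ j)"
        by (cases j; simp add: Phi_def hinner_scaleR Df_scaleR; simp add: scaleR_conv_of_real)
    qed
  qed
  have ex: "\<exists>v. Phi v = t" for t :: "complex^'n option"
  proof -
    let ?c = "t $ None"
    let ?b = "(\<chi> i. t $ Some i) :: complex^'n"
    have "?b - (?c / nx) *s ?L x \<in> ?L ` hperp x" using surj by simp
    then obtain w where w: "w \<in> hperp x" "?L w = ?b - (?c / nx) *s ?L x"
      by (elim imageE) simp
    let ?v = "w + (?c / nx) *s x"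
    have "hinner ?v x = ?c"
      using w(1) nx0 by (simp add: hinner_add hinner_smult hinner_self hperp_def nx_def)
    moreover have "?L ?v = ?b" using w(2) by (simp add: Df_add Df_smult)
    ultimately have "Phi ?v = t" by (simp add: Phi_def vec_eq_iff split: option.splits)
    thus ?thesis by blast
  qed
  have "surj Phi" by (metis ex surj_def)
  hence "inj Phi" using linear_surjective_imp_injective[OF linPhi] by simp
  have "inj_on ?L (hperp x)"
  proof (rule inj_onI)
    fix v w assume "v \<in> hperp x" "w \<in> hperp x" "?L v = ?L w"
    hence "Phi v = Phi w" by (simp add: Phi_def hperp_def vec_eq_iff split: option.splits)
    thus "v = w" using \<open>inj Phi\<close> by (simp add: inj_def)
  qed
  thus ?thesis unfolding restr_invertible_def bij_betw_def using surj by simp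
qed

lemma pow_ineq_a:
  fixes a r :: real
  assumes "a \<ge> 1" "r \<ge> 0"
  shows "a * ((1 + r) ^ m - 1) \<le> (1 + a * r) ^ m - 1"
proof (induction m)
  case 0 then show ?case by simp
next
  case (Suc m)
  have ar: "1 + a * r \<ge> 0" using assms by simp
  have "(1 + a * r) ^ Suc m = (1 + a * r) * (1 + a * r) ^ m" by simp
  also have "\<dots> \<ge> (1 + a * r) * (a * (1 + r) ^ m - a + 1)"
  proof -
    have IH': "a * (1 + r) ^ m - a + 1 \<le> (1 + a * r) ^ m" using Suc.IH by (simp add: right_diff_distrib)
    show ?thesis by (rule mult_left_mono[OF IH' ar])
  qed
  finally have 1: "(1 + a * r) ^ Suc m \<ge> (1 + a * r) * (a * (1 + r) ^ m - a + 1)" .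
  have "(1 + a * r) * (a * (1 + r) ^ m - a + 1) - (a * (1 + r) ^ Suc m - a + 1) = a * r * (a - 1) * ((1 + r) ^ m - 1)"
    by (simp add: algebra_simps)
  moreover have "(1 + r) ^ m \<ge> 1" using assms by simp
  ultimately have "(1 + a * r) * (a * (1 + r) ^ m - a + 1) \<ge> a * (1 + r) ^ Suc m - a + 1"
    using assms by (smt (verit) mult_nonneg_nonneg)
  with 1 show ?case by (simp add: algebra_simps)
qed

lemma scalar_final:
  fixes D :: nat and mu r s :: real
  assumes D: "D \<ge> 2" and mu: "sqrt D * mu \<ge> 1" and s: "0 \<le> s" "s \<le> r"
    and u: "real D powr (3/2) / 2 * mu * r < 1"
  shows "1 + mu * sqrt D * ((1 + s) ^ (D - 1) - 1) \<le> 1 / (1 - real D powr (3/2) / 2 * mu * r)\<^sup>2"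
proof -
  define a where "a = sqrt D * mu"
  have a1: "a \<ge> 1" using mu by (simp add: a_def)
  have r0: "r \<ge> 0" using s by simp
  have Dp: "real D powr (3/2) = real D * sqrt D"
  proof -
    have "real D powr (3/2) = real D powr (1 + 1/2)" by (simp add: numeral_eq_Suc)
    also have "\<dots> = real D powr 1 * real D powr (1/2)" by (rule powr_add)
    also have "\<dots> = real D * sqrt D" using D by (simp add: powr_half_sqrt)
    finally show ?thesis .
  qed
  define u where "u = real D powr (3/2) / 2 * mu * r"
  have u_eq: "u = real D * a * r / 2" by (simp add: u_def Dp a_def)
  have u0: "u \<ge> 0" unfolding u_eq using a1 r0 by simp
  have u1: "u < 1" using u by (simp add: u_def)
  have "(1 + s) ^ (D - 1) \<le> (1 + r) ^ (D - 1)" using s by (intro power_mono) auto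
  hence "a * ((1 + s) ^ (D - 1) - 1) \<le> a * ((1 + r) ^ (D - 1) - 1)" using a1 by (intro mult_left_mono) auto
  also have "\<dots> \<le> (1 + a * r) ^ (D - 1) - 1" by (rule pow_ineq_a[OF a1 r0])
  finally have 1: "1 + a * ((1 + s) ^ (D - 1) - 1) \<le> (1 + a * r) ^ (D - 1)" by simp
  have "(1 + a * r) ^ (D - 1) \<le> (1 + a * r) ^ D"
    using a1 r0 by (intro power_increasing) auto
  also have "\<dots> \<le> exp (a * r) ^ D"
    using a1 r0 by (intro power_mono) (auto simp: exp_ge_add_one_self add.commute)
  also have "\<dots> = exp (2 * u)" by (simp add: exp_of_nat_mult[symmetric] u_eq)
  finally have 2: "(1 + a * r) ^ (D - 1) \<le> exp (2 * u)" .
  have "1 - u \<le> exp (- u)" using exp_ge_add_one_self[of "-u"] by simp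
  hence "(1 - u)\<^sup>2 \<le> (exp (- u))\<^sup>2" using u1 by (intro power_mono) auto
  also have "(exp (- u))\<^sup>2 = exp (- (2 * u))" by (simp add: power2_eq_square exp_add[symmetric])
  finally have "(1 - u)\<^sup>2 \<le> exp (- (2 * u))" .
  hence "exp (2 * u) * (1 - u)\<^sup>2 \<le> exp (2 * u) * exp (- (2 * u))" by (intro mult_left_mono) auto
  hence "exp (2 * u) * (1 - u)\<^sup>2 \<le> 1" by (simp add: exp_minus)
  hence 3: "exp (2 * u) \<le> 1 / (1 - u)\<^sup>2" using u1 by (simp add: field_simps)
  show ?thesis using 1 2 3 by (simp add: a_def u_def mult.commute)
qed

lemma hperp_add: "a \<in> hperp x \<Longrightarrow> b \<in> hperp x \<Longrightarrow> a + b \<in> hperp x"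
  by (simp add: hperp_def hinner_add)
lemma hperp_smult: "a \<in> hperp x \<Longrightarrow> c *s a \<in> hperp x"
  by (simp add: hperp_def hinner_smult)

lemma Linv_in:
  assumes "restr_invertible d f x"
  shows "restr_inv d f x v \<in> hperp x" "Df d f x (restr_inv d f x v) = v"
  using assms unfolding restr_invertible_def restr_inv_def bij_betw_def
  by (auto intro: inv_into_into f_inv_into_f)

lemma Linv_of:
  assumes "restr_invertible d f x" "w \<in> hperp x"
  shows "restr_inv d f x (Df d f x w) = w"
  using assms unfolding restr_invertible_def restr_inv_def bij_betw_def
  by (auto intro: inv_into_f_f)

lemma Linv_add:
  assumes "restr_invertible d f x"
  shows "restr_inv d f x (a + b) = restr_inv d f x a + restr_inv d f x b"
proof -
  have "Df d f x (restr_inv d f x a + restr_inv d f x b) = a + b"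
    using Linv_in[OF assms] by (simp add: Df_add)
  hence "restr_inv d f x (a + b) = restr_inv d f x (Df d f x (restr_inv d f x a + restr_inv d f x b))" by simp
  also have "\<dots> = restr_inv d f x a + restr_inv d f x b"
    by (rule Linv_of[OF assms hperp_add]) (use Linv_in[OF assms] in auto)
  finally show ?thesis .
qed

lemma Linv_smult:
  assumes "restr_invertible d f x"
  shows "restr_inv d f x (c *s a) = c *s restr_inv d f x a"
proof -
  have "Df d f x (c *s restr_inv d f x a) = c *s a"
    using Linv_in[OF assms] by (simp add: Df_smult)
  hence "restr_inv d f x (c *s a) = restr_inv d f x (Df d f x (c *s restr_inv d f x a))" by simp
  also have "\<dots> = c *s restr_inv d f x a"
    by (rule Linv_of[OF assms hperp_smult]) (use Linv_in[OF assms] in auto)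
  finally show ?thesis .
qed

lemma scaleR_smult_vec: "r *\<^sub>R (v::complex^'k::finite) = complex_of_real r *s v"
  unfolding vec_eq_iff vector_scaleR_component by (simp add: scaleR_conv_of_real)

lemma Linv_linear:
  assumes "restr_invertible d f x"
  shows "linear (restr_inv d f x)"
  by (rule linearI) (simp_all add: Linv_add[OF assms] Linv_smult[OF assms] scaleR_smult_vec)

definition dg :: "('n::finite \<Rightarrow> nat) \<Rightarrow> complex^'m::finite \<Rightarrow> complex^'n \<Rightarrow> complex^'n" where
  "dg d x w = (\<chi> i. complex_of_real (sqrt (real (d i)) * norm x powr (real (d i) - 1)) * w $ i)"

lemma dg_linear: "linear (dg d x)"
  by (rule linearI) (simp_all add: dg_def vec_eq_iff algebra_simps scaleR_conv_of_real)

lemma mu_alt: "mu d f x = (if restr_invertible d f x then ereal (bw_norm d f * onorm (\<lambda>w. restr_inv d f x (dg d x w))) else \<infinity>)"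
  by (simp add: mu_def dg_def)

lemma bl_comp:
  assumes "restr_invertible d f x"
  shows "bounded_linear (\<lambda>w. restr_inv d f x (dg d x w))"
proof -
  have "linear ((restr_inv d f x) \<circ> (dg d x))"
    by (rule linear_compose[OF dg_linear Linv_linear[OF assms]])
  thus ?thesis by (simp add: linear_conv_bounded_linear o_def)
qed

lemma deg_pos:
  assumes "restr_invertible d f x"
  shows "d i \<ge> 1"
proof (rule ccontr)
  assume "\<not> d i \<ge> 1"
  hence "d i = 0" by simp
  have "Df d f x (restr_inv d f x (axis i 1)) = axis i 1" using Linv_in[OF assms] by simp
  hence "Df d f x (restr_inv d f x (axis i 1)) $ i = 1" by simp
  moreover have "Df d f x w $ i = 0" for w
    using \<open>d i = 0\<close> by (simp add: Df_apply DRow_def)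
  ultimately show False by simp
qed

lemma hinner_cs: "cmod (hinner u v) \<le> norm u * norm (v::complex^'k::finite)"
proof -
  have "cmod (hinner u v) \<le> (\<Sum>j\<in>UNIV. cmod (u $ j) * cmod (v $ j))"
    unfolding hinner_def by (rule order_trans[OF norm_sum]) (simp add: norm_mult)
  also have "\<dots> \<le> sqrt (\<Sum>j\<in>UNIV. (cmod (u $ j))\<^sup>2) * sqrt (\<Sum>j\<in>UNIV. (cmod (v $ j))\<^sup>2)"
    by (rule sum_le_sqrt) auto
  also have "\<dots> = norm u * norm v"
    by (simp add: norm_vec_sq[symmetric])
  finally show ?thesis .
qed

lemma vec_norm_le:
  fixes q :: "complex^'k::finite"
  assumes "\<And>i. cmod (q $ i) \<le> K * b i" "K \<ge> 0"
  shows "norm q \<le> K * sqrt (\<Sum>i\<in>UNIV. (b i)\<^sup>2)"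
proof -
  have "(norm q)\<^sup>2 \<le> (\<Sum>i\<in>UNIV. (K * b i)\<^sup>2)"
    unfolding norm_vec_sq by (intro sum_mono power_mono assms) auto
  also have "\<dots> = (K * sqrt (\<Sum>i\<in>UNIV. (b i)\<^sup>2))\<^sup>2"
    using assms(2) by (simp add: power_mult_distrib sum_distrib_left[symmetric] sum_nonneg)
  finally have "(norm q)\<^sup>2 \<le> (K * sqrt (\<Sum>i\<in>UNIV. (b i)\<^sup>2))\<^sup>2" .
  moreover have "0 \<le> K * sqrt (\<Sum>i\<in>UNIV. (b i)\<^sup>2)"
    by (rule mult_nonneg_nonneg[OF assms(2) real_sqrt_ge_zero[OF sum_nonneg]]) simp
  ultimately show ?thesis by (rule power2_le_imp_le)
qed

lemma bw_eq: "bw_norm d f = sqrt (\<Sum>i\<in>UNIV. (bwi (d i) (f i))\<^sup>2)"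
proof -
  have "(bwi (d i) (f i))\<^sup>2 = (\<Sum>\<alpha>\<in>mindex (d i). (\<Prod>j\<in>UNIV. fact (\<alpha> j)) / fact (d i) * (cmod (f i \<alpha>))\<^sup>2)" for i
    unfolding bwi_def by (subst real_sqrt_pow2) (auto intro!: sum_nonneg mult_nonneg_nonneg divide_nonneg_nonneg prod_nonneg)
  thus ?thesis by (simp add: bw_norm_def)
qed

lemma bw_nonneg: "bw_norm d f \<ge> 0"
  by (simp add: bw_eq sum_nonneg)

lemma hinner_add2: "hinner a (b + c) = hinner a b + hinner a c"
  by (simp add: hinner_def algebra_simps sum.distrib)
lemma hinner_diff2: "hinner a (b - c) = hinner a b - hinner a c"
  by (simp add: hinner_def algebra_simps sum_subtractf)
lemma hinner_smult2: "hinner a (c *s b) = cnj c * hinner a b"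
  by (simp add: hinner_def algebra_simps sum_distrib_left)

lemma norm_sq_hinner: "(norm a)\<^sup>2 = Re (hinner a a)"
  by (simp add: hinner_self)

lemma norm_diff_sq: "(norm (a - b))\<^sup>2 = (norm a)\<^sup>2 + (norm b)\<^sup>2 - 2 * Re (hinner a b)"
proof -
  have "hinner (a - b) (a - b) = hinner a a + hinner b b - (hinner a b + cnj (hinner a b))"
    by (simp add: hinner_diff hinner_diff2 hinner_cnj[of b a])
  hence "Re (hinner (a - b) (a - b)) = Re (hinner a a) + Re (hinner b b) - 2 * Re (hinner a b)"
    by simp
  thus ?thesis by (simp add: norm_sq_hinner)
qed

definition tcos :: "complex^'v::finite \<Rightarrow> complex^'v \<Rightarrow> real" where
  "tcos x y = cmod (hinner x y) / (norm x * norm y)"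

lemma tcos_bounds:
  assumes "x \<noteq> 0" "y \<noteq> 0"
  shows "0 \<le> tcos x y" "tcos x y \<le> 1"
  using hinner_cs[of x y] assms by (auto simp: tcos_def field_simps)

lemma dR_props:
  assumes "x \<noteq> 0" "y \<noteq> 0"
  shows "cos (dR x y) = tcos x y" "sin (dR x y) = sqrt (1 - (tcos x y)\<^sup>2)" "0 \<le> dR x y"
    "dR x y \<le> pi/2"
  using tcos_bounds[OF assms] arccos_le_pi2[of "tcos x y"]
  by (auto simp: dR_def tcos_def[symmetric] sin_arccos arccos_lbound)

lemma proj_bound:
  fixes x y z :: "complex^'v::finite"
  assumes x: "x \<noteq> 0" and y: "y \<noteq> 0" and z: "z \<in> hperp y"
  shows "cmod (hinner z x) \<le> norm z * (norm x * sin (dR x y))"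
proof -
  define h where "h = hinner x y"
  define Y2 where "Y2 = complex_of_real ((norm y)\<^sup>2)"
  have Y20: "Y2 \<noteq> 0" using y by (simp add: Y2_def)
  have hyy: "hinner y y = Y2" by (simp add: Y2_def hinner_self)
  define xp where "xp = x - (h / Y2) *s y"
  have zy: "hinner z y = 0" using z by (simp add: hperp_def)
  have 1: "hinner z x = hinner z xp"
    by (simp add: xp_def hinner_diff2 hinner_smult2 zy)
  have xpy: "hinner xp y = 0"
    using Y20 by (simp add: xp_def hinner_diff hinner_smult hyy h_def)
  have "hinner xp xp = hinner xp (x - (h / Y2) *s y)" by (simp add: xp_def)
  also have "\<dots> = hinner xp x"
    by (simp only: hinner_diff2 hinner_smult2 xpy) simp
  also have "\<dots> = hinner x x - (h / Y2) * cnj h"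
    by (simp add: xp_def hinner_diff hinner_smult hinner_cnj[of y x] h_def)
  also have "\<dots> = complex_of_real ((norm x)\<^sup>2 - (cmod h)\<^sup>2 / (norm y)\<^sup>2)"
  proof -
    have hh: "h * cnj h = complex_of_real ((cmod h)\<^sup>2)" by (rule complex_norm_square[symmetric])
    have "(h / Y2) * cnj h = (h * cnj h) / Y2" by simp
    also have "\<dots> = complex_of_real ((cmod h)\<^sup>2 / (norm y)\<^sup>2)" unfolding hh Y2_def by simp
    finally show ?thesis by (simp add: hinner_self)
  qed
  finally have "(norm xp)\<^sup>2 = (norm x)\<^sup>2 - (cmod h)\<^sup>2 / (norm y)\<^sup>2"
    by (simp add: norm_sq_hinner)
  also have "\<dots> = (norm x * sqrt (1 - (tcos x y)\<^sup>2))\<^sup>2"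
  proof -
    have "1 - (tcos x y)\<^sup>2 \<ge> 0" using tcos_bounds[OF x y] by (simp add: abs_square_le_1)
    hence "(norm x * sqrt (1 - (tcos x y)\<^sup>2))\<^sup>2 = (norm x)\<^sup>2 * (1 - (tcos x y)\<^sup>2)"
      by (simp add: power_mult_distrib)
    also have "\<dots> = (norm x)\<^sup>2 - (cmod h)\<^sup>2 / (norm y)\<^sup>2"
      using x y by (simp add: tcos_def h_def field_simps power2_eq_square)
    finally show ?thesis by simp
  qed
  finally have "norm xp = norm x * sqrt (1 - (tcos x y)\<^sup>2)"
  proof (rule power2_eq_imp_eq)
    have "1 - (tcos x y)\<^sup>2 \<ge> 0" using tcos_bounds[OF x y] by (simp add: abs_square_le_1)
    thus "0 \<le> norm x * sqrt (1 - (tcos x y)\<^sup>2)" by simp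
  qed simp
  hence "norm xp = norm x * sin (dR x y)" using dR_props[OF x y] by simp
  thus ?thesis using 1 hinner_cs[of z xp] by simp
qed

lemma y_prime:
  fixes x y :: "complex^'v::finite"
  assumes x: "x \<noteq> 0" and y: "y \<noteq> 0"
  obtains c where "cmod c = norm x / norm y" "norm (c *s y - x) \<le> norm x * dR x y"
proof -
  define h where "h = hinner x y"
  define p where "p = (if h = 0 then 1 else h / complex_of_real (cmod h))"
  define c where "c = p * complex_of_real (norm x / norm y)"
  have p1: "cmod p = 1" by (simp add: p_def norm_divide)
  have cn: "cmod c = norm x / norm y" unfolding c_def norm_mult p1 norm_of_real by simp
  have pcnj: "p * cnj h = complex_of_real (cmod h)"
  proof (cases "h = 0")
    case True then show ?thesis by (simp add: p_def)
  next
    case False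
    then have "p * cnj h = (h * cnj h) / complex_of_real (cmod h)" by (simp add: p_def)
    also have "\<dots> = complex_of_real (cmod h)"
      using False by (simp add: complex_norm_square[symmetric] power2_eq_square)
    finally show ?thesis .
  qed
  have ny: "norm (c *s y) = norm x"
  proof -
    have "norm (c *s y) = cmod c * norm y"
      by (simp add: norm_vec_def L2_set_def norm_mult power_mult_distrib sum_distrib_left[symmetric] real_sqrt_mult)
    thus ?thesis using cn y by simp
  qed
  have "hinner (c *s y) x = c * cnj h" by (simp add: hinner_smult hinner_cnj[of y x] h_def)
  also have "\<dots> = complex_of_real (cmod h * (norm x / norm y))" by (simp add: c_def pcnj[symmetric] ac_simps)
  finally have hr0: "Re (hinner (c *s y) x) = cmod h * (norm x / norm y)"
    by (simp only: Re_complex_of_real)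
  have hr: "Re (hinner (c *s y) x) = (norm x)\<^sup>2 * tcos x y"
    unfolding hr0 using x y by (simp add: tcos_def h_def power2_eq_square field_simps)
  define r where "r = dR x y"
  have r0: "0 \<le> r" "r \<le> pi / 2" using dR_props[OF x y] by (auto simp: r_def)
  have "(norm (c *s y - x))\<^sup>2 = 2 * (norm x)\<^sup>2 * (1 - cos r)"
    by (simp add: norm_diff_sq ny hr dR_props(1)[OF x y] r_def algebra_simps)
  also have "1 - cos r = 2 * (sin (r / 2))\<^sup>2"
    using cos_double_sin[of "r/2"] by simp
  also have "sin (r / 2) \<le> r / 2" using r0 by (intro sin_x_le_x) simp
  hence "(sin (r / 2))\<^sup>2 \<le> (r / 2)\<^sup>2"
    using r0 by (intro power_mono) (auto intro!: sin_ge_zero)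
  hence "2 * (norm x)\<^sup>2 * (2 * (sin (r / 2))\<^sup>2) \<le> 2 * (norm x)\<^sup>2 * (2 * (r / 2)\<^sup>2)"
    by (intro mult_left_mono) auto
  finally have "(norm (c *s y - x))\<^sup>2 \<le> (norm x * r)\<^sup>2"
    by (simp add: power_mult_distrib power2_eq_square ac_simps)
  hence "norm (c *s y - x) \<le> norm x * r"
    by (rule power2_le_imp_le) (simp add: r0(1))
  thus ?thesis using that cn r_def by blast
qed

lemma norm_smult_vec: "norm (c *s (v::complex^'k::finite)) = cmod c * norm v"
  by (simp add: norm_vec_def L2_set_def norm_mult power_mult_distrib sum_distrib_left[symmetric] real_sqrt_mult)

lemma dg_comp:
  assumes "x \<noteq> 0" "1 \<le> d i"
  shows "dg d x w $ i = complex_of_real (sqrt (real (d i)) * norm x ^ (d i - 1)) * w $ i"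
proof -
  have e: "real (d i) - 1 = real (d i - 1)" using assms(2) by linarith
  have "norm x powr (real (d i) - 1) = norm x ^ (d i - 1)"
    unfolding e by (rule powr_realpow) (use assms(1) in simp)
  thus ?thesis by (simp add: dg_def)
qed

lemma comp_bound:
  fixes B Z X t :: real
  assumes k: "1 \<le> k" "k \<le> D" and X: "X > 0" and t: "t \<ge> 0" and BZ: "B \<ge> 0" "Z \<ge> 0"
  shows "real k * B * Z * ((X + t) ^ (k - 1) - X ^ (k - 1)) / (sqrt k * X ^ (k - 1))
     \<le> Z * (sqrt D * ((1 + t / X) ^ (D - 1) - 1)) * B"
proof -
  have xt: "X + t = X * (1 + t / X)" using X by (simp add: field_simps)
  have e: "(X + t) ^ (k - 1) - X ^ (k - 1) = X ^ (k - 1) * ((1 + t / X) ^ (k - 1) - 1)"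
    unfolding xt power_mult_distrib by (simp add: right_diff_distrib)
  have Xk: "X ^ (k - 1) > 0" using X by simp
  have sk0: "sqrt (real k) > 0" using k by simp
  have "real k * B * Z * ((X + t) ^ (k - 1) - X ^ (k - 1)) / (sqrt k * X ^ (k - 1))
      = (real k / sqrt k) * ((1 + t / X) ^ (k - 1) - 1) * (Z * B)"
  proof -
    have gen: "\<And>a s P F. P \<noteq> 0 \<Longrightarrow> s \<noteq> 0 \<Longrightarrow> a * B * Z * (P * F) / (s * P) = (a / s) * F * (Z * B)"
      by (simp add: field_simps)
    show ?thesis unfolding e by (rule gen) (use Xk in linarith, use sk0 in linarith)
  qed
  also have "real k / sqrt k = sqrt k" by (simp add: real_div_sqrt)
  finally have eq1: "real k * B * Z * ((X + t) ^ (k - 1) - X ^ (k - 1)) / (sqrt k * X ^ (k - 1))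
      = sqrt k * ((1 + t / X) ^ (k - 1) - 1) * (Z * B)" .
  have "sqrt k * ((1 + t / X) ^ (k - 1) - 1) * (Z * B) \<le> sqrt D * ((1 + t / X) ^ (D - 1) - 1) * (Z * B)"
  proof (rule mult_right_mono[OF mult_mono])
    show "sqrt k \<le> sqrt D" using k by simp
    have "1 \<le> 1 + t / X" using X t by simp
    thus "(1 + t / X) ^ (k - 1) - 1 \<le> (1 + t / X) ^ (D - 1) - 1"
      using k by (simp add: power_increasing)
    show "0 \<le> sqrt D" by simp
    show "0 \<le> (1 + t / X) ^ (k - 1) - 1" using X t by simp
    show "0 \<le> Z * B" using BZ by simp
  qed
  thus ?thesis unfolding eq1 by (simp add: ac_simps)
qed

lemma main_ineq:
  fixes d :: "'n::finite \<Rightarrow> nat" and f :: "'n \<Rightarrow> ('n option \<Rightarrow> nat) \<Rightarrow> complex"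
    and x y :: "complex^'n option"
  assumes D2: "Max (range d) \<ge> 2"
    and x: "x \<noteq> 0" and y: "y \<noteq> 0"
    and ix: "restr_invertible d f x" and iy: "restr_invertible d f y"
    and u: "real (Max (range d)) powr (3/2) / 2 * (bw_norm d f * onorm (\<lambda>w. restr_inv d f x (dg d x w))) * dR x y < 1"
  shows "onorm (\<lambda>w. restr_inv d f x (dg d x w)) \<le> onorm (\<lambda>w. restr_inv d f y (dg d y w)) *
     (1 / (1 - real (Max (range d)) powr (3/2) / 2 * (bw_norm d f * onorm (\<lambda>w. restr_inv d f x (dg d x w))) * dR x y)\<^sup>2
      + delta d f x * dP x y)"
proof -
  define Mx where "Mx = onorm (\<lambda>w. restr_inv d f x (dg d x w))"
  define My where "My = onorm (\<lambda>w. restr_inv d f y (dg d y w))"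
  define D where "D = Max (range d)"
  define bw where "bw = bw_norm d f"
  define X where "X = norm x"
  define Y where "Y = norm y"
  define r where "r = dR x y"
  define Lx where "Lx = restr_inv d f x"
  define Ly where "Ly = restr_inv d f y"
  have X0: "X > 0" using x by (simp add: X_def)
  have Y0: "Y > 0" using y by (simp add: Y_def)
  have deg: "\<And>i. 1 \<le> d i" using deg_pos[OF ix] .
  have degD: "\<And>i. d i \<le> D" unfolding D_def by (simp add: Max_ge)
  have bw0: "bw \<ge> 0" by (simp add: bw_def bw_nonneg)
  have blx: "bounded_linear (\<lambda>w. Lx (dg d x w))" unfolding Lx_def by (rule bl_comp[OF ix])
  have bly: "bounded_linear (\<lambda>w. Ly (dg d y w))" unfolding Ly_def by (rule bl_comp[OF iy])
  have onx: "\<And>v. norm (Lx (dg d x v)) \<le> Mx * norm v"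
    using onorm[OF blx] by (simp add: Mx_def Lx_def)
  have ony: "\<And>v. norm (Ly (dg d y v)) \<le> My * norm v"
    using onorm[OF bly] by (simp add: My_def Ly_def)
  have Mx0: "Mx \<ge> 0" using onorm_pos_le[OF blx] by (simp add: Mx_def Lx_def)
  have My0: "My \<ge> 0" using onorm_pos_le[OF bly] by (simp add: My_def Ly_def)
  define sx where "sx i = sqrt (real (d i)) * X ^ (d i - 1)" for i
  have sx0: "sx i > 0" for i
  proof -
    have "real (d i) > 0" using deg[of i] by simp
    thus ?thesis using X0 by (simp add: sx_def)
  qed
  have dgx: "\<And>w i. dg d x w $ i = complex_of_real (sx i) * w $ i"
    using dg_comp[OF x deg] by (simp add: sx_def X_def)
  have dg_inv: "\<And>q. dg d x (\<chi> i. q $ i / complex_of_real (sx i)) = q"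
  proof -
    fix q :: "complex^'n"
    have "\<And>i. complex_of_real (sx i) \<noteq> 0" using sx0 by (metis of_real_eq_0_iff less_irrefl)
    thus "dg d x (\<chi> i. q $ i / complex_of_real (sx i)) = q" by (simp add: vec_eq_iff dgx)
  qed
  have rdiv: "\<And>i. real (d i) / sqrt (real (d i)) = sqrt (real (d i))" by (simp add: real_div_sqrt)

  have A: "sqrt D * (bw * Mx) \<ge> 1"
  proof -
    obtain i0 :: 'n where True by simp
    define w0 where "w0 = Lx (axis i0 1)"
    have w0h: "w0 \<in> hperp x" "Df d f x w0 = axis i0 1"
      using Linv_in[OF ix] by (simp_all add: w0_def Lx_def)
    have w0n: "norm w0 > 0"
    proof -
      have "Df d f x 0 = 0" by (rule linear_0[OF Df_linear])
      moreover have "axis i0 (1::complex) \<noteq> 0" by (simp add: vec_eq_iff axis_def)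
      ultimately have "w0 \<noteq> 0" using w0h(2) by auto
      thus ?thesis by simp
    qed
    define q where "q = (\<chi> i. Df d f x w0 $ i / complex_of_real (sx i))"
    have "Lx (dg d x q) = w0"
      unfolding q_def dg_inv using Linv_of[OF ix w0h(1)] by (simp add: Lx_def)
    hence 1: "norm w0 \<le> Mx * norm q" using onx[of q] by simp
    have "cmod (q $ i) \<le> (sqrt D * norm w0) * bwi (d i) (f i)" for i
    proof -
      have "cmod (q $ i) = cmod (Df d f x w0 $ i) / sx i" using sx0[of i] by (simp add: q_def norm_divide)
      also have "\<dots> \<le> real (d i) * bwi (d i) (f i) * X ^ (d i - 1) * norm w0 / sx i"
        using DRow_bound[of "d i" "f i" x w0] sx0[of i] by (intro divide_right_mono) (simp_all add: Df_apply X_def)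
      also have "\<dots> = (real (d i) / sqrt (real (d i))) * bwi (d i) (f i) * norm w0"
        using X0 sx0[of i] by (simp add: sx_def field_simps)
      also have "\<dots> = sqrt (real (d i)) * bwi (d i) (f i) * norm w0" by (simp add: rdiv)
      also have "\<dots> \<le> sqrt D * bwi (d i) (f i) * norm w0"
        using degD[of i] bwi_nonneg[of "d i" "f i"] by (intro mult_right_mono) auto
      finally show ?thesis by (simp add: ac_simps)
    qed
    hence "norm q \<le> (sqrt D * norm w0) * bw"
      using vec_norm_le[of q "sqrt D * norm w0" "\<lambda>i. bwi (d i) (f i)"] by (simp add: bw_def bw_eq)
    hence "norm w0 \<le> Mx * ((sqrt D * norm w0) * bw)"
      using 1 Mx0 by (meson mult_left_mono order_trans)
    hence "norm w0 * 1 \<le> norm w0 * (sqrt D * (bw * Mx))" by (simp add: ac_simps)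
    thus ?thesis using w0n by (simp add: mult_le_cancel_left)
  qed
  obtain c where c: "cmod c = X / Y" "norm (c *s y - x) \<le> X * r"
    using y_prime[OF x y] by (auto simp: X_def Y_def r_def)
  define e where "e = c *s y - x"
  define t where "t = norm e"
  define s where "s = t / X"
  have r0: "0 \<le> r" "r \<le> pi / 2" using dR_props[OF x y] by (auto simp: r_def)
  have s0: "0 \<le> s" using X0 by (simp add: s_def t_def)
  have sr: "s \<le> r" using c(2) X0 by (simp add: s_def t_def e_def field_simps)
  define G where "G = sqrt D * ((1 + s) ^ (D - 1) - 1)"
  have G0: "G \<ge> 0" using s0 by (simp add: G_def)
  define dl where "dl = delta d f x"
  have dl0: "dl \<ge> 0" using X0 by (simp add: dl_def delta_def X_def)
  define sn where "sn = sin r"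
  have sn0: "sn \<ge> 0" using r0 by (simp add: sn_def sin_ge_zero)
  have c0: "c \<noteq> 0" using c(1) X0 Y0 by auto

  have C: "norm (Lx (dg d x v)) \<le> (My * (1 + sn * dl + bw * Mx * G)) * norm v" for v
  proof -
    define q0 where "q0 = complex_of_real X / (complex_of_real Y * c)"
    have q01: "cmod q0 = 1" using c(1) X0 Y0 by (simp add: q0_def norm_divide norm_mult)
    have cq: "c * complex_of_real Y * q0 = complex_of_real X" using c0 Y0 by (simp add: q0_def)
    define uv where "uv = (\<chi> i. q0 ^ (d i - 1) * v $ i)"
    have nuv: "norm uv = norm v"
      unfolding norm_vec_def L2_set_def by (simp add: uv_def norm_mult norm_power q01)
    define z where "z = Ly (dg d y uv)"
    have zh: "z \<in> hperp y" "Df d f y z = dg d y uv" using Linv_in[OF iy] by (simp_all add: z_def Ly_def)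
    have nz: "norm z \<le> My * norm v" using ony[of uv] nuv by (simp add: z_def)
    have nz0: "norm z \<ge> 0" by simp
    have Dy: "Df d f (c *s y) z = dg d x v"
    proof -
      have "Df d f (c *s y) z $ i = dg d x v $ i" for i
      proof -
        have "Df d f (c *s y) z $ i = c ^ (d i - 1) * (dg d y uv $ i)" by (simp add: Df_homog zh(2))
        also have "\<dots> = c ^ (d i - 1) * (complex_of_real (sqrt (real (d i)) * Y ^ (d i - 1)) * (q0 ^ (d i - 1) * v $ i))"
          using dg_comp[of y d i, OF y deg[of i]] by (simp add: uv_def Y_def)
        also have "\<dots> = complex_of_real (sqrt (real (d i))) * (c * complex_of_real Y * q0) ^ (d i - 1) * v $ i"
          by (simp add: power_mult_distrib ac_simps)
        also have "\<dots> = dg d x v $ i" unfolding cq by (simp add: dgx sx_def)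
        finally show ?thesis .
      qed
      thus ?thesis by (simp add: vec_eq_iff)
    qed
    define qd where "qd = (\<chi> i. (Df d f (x + e) z $ i - Df d f x z $ i) / complex_of_real (sx i))"
    have dgqd: "dg d x qd = Df d f (x + e) z - Df d f x z"
      unfolding qd_def dg_inv[of "Df d f (x + e) z - Df d f x z", simplified] by simp
    have "cmod (qd $ i) \<le> (norm z * G) * bwi (d i) (f i)" for i
    proof -
      have "cmod (qd $ i) = cmod (Df d f (x + e) z $ i - Df d f x z $ i) / sx i"
        using sx0[of i] by (simp add: qd_def norm_divide)
      also have "\<dots> \<le> real (d i) * bwi (d i) (f i) * norm z * ((X + t) ^ (d i - 1) - X ^ (d i - 1)) / sx i"
        using DRow_diff[of "d i" "f i" x e z] sx0[of i] by (intro divide_right_mono) (simp_all add: Df_apply X_def t_def)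
      also have "\<dots> \<le> norm z * (sqrt D * ((1 + t / X) ^ (D - 1) - 1)) * bwi (d i) (f i)"
        unfolding sx_def by (rule comp_bound[OF deg degD X0]) (simp_all add: t_def bwi_nonneg)
      finally show ?thesis by (simp add: G_def s_def)
    qed
    hence nqd: "norm qd \<le> (norm z * G) * bw"
      using vec_norm_le[of qd "norm z * G" "\<lambda>i. bwi (d i) (f i)"] G0 by (simp add: bw_def bw_eq)
    have xe: "x + e = c *s y" by (simp add: e_def)
    have split1: "dg d x v = Df d f x z + dg d x qd" using Dy by (simp add: dgqd xe)
    define a where "a = hinner z x / complex_of_real (X\<^sup>2)"
    define p where "p = z - a *s x"
    have ph: "p \<in> hperp x"
      using X0 by (simp add: hperp_def p_def a_def hinner_diff hinner_smult hinner_self X_def)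
    have zp: "z = p + a *s x" by (simp add: p_def)
    have LDz: "Lx (Df d f x z) = p + a *s Lx (Df d f x x)"
    proof -
      have "Df d f x z = Df d f x p + a *s Df d f x x" unfolding zp by (simp add: Df_add Df_smult)
      hence "Lx (Df d f x z) = Lx (Df d f x p) + a *s Lx (Df d f x x)"
        by (simp add: Lx_def Linv_add[OF ix] Linv_smult[OF ix])
      thus ?thesis using Linv_of[OF ix ph] by (simp add: Lx_def)
    qed
    have np: "norm p \<le> norm z"
    proof -
      have px: "hinner p x = 0" using ph by (simp add: hperp_def)
      have "(norm p)\<^sup>2 = Re (hinner p p)" by (rule norm_sq_hinner)
      also have "hinner p p = hinner p z"
      proof -
        have "hinner p p = hinner p z - cnj a * hinner p x"
          by (subst (2) p_def) (simp only: hinner_diff2 hinner_smult2)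
        thus ?thesis using px by simp
      qed
      also have "Re (hinner p z) \<le> norm p * norm z"
        using hinner_cs[of p z] complex_Re_le_cmod[of "hinner p z"] by linarith
      finally have "norm p * norm p \<le> norm p * norm z" by (simp add: power2_eq_square)
      thus ?thesis by (cases "norm p = 0") (auto simp: mult_le_cancel_left)
    qed
    have nLx: "norm (Lx (Df d f x x)) = X * dl"
      using X0 by (simp add: dl_def delta_def Df_euler Lx_def X_def)
    have na: "cmod a \<le> norm z * sn / X"
    proof -
      have "cmod (hinner z x) \<le> norm z * (X * sn)" using proj_bound[OF x y zh(1)] by (simp add: X_def sn_def r_def)
      moreover have "cmod a = cmod (hinner z x) / X\<^sup>2" unfolding a_def norm_divide norm_of_real by simp
      ultimately have "cmod a \<le> norm z * (X * sn) / X\<^sup>2" using X0 by (simp add: divide_right_mono)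
      also have "\<dots> = norm z * sn / X" using X0 by (simp add: power2_eq_square)
      finally show ?thesis .
    qed
    have "norm (a *s Lx (Df d f x x)) \<le> norm z * sn * dl"
    proof -
      have "norm (a *s Lx (Df d f x x)) = cmod a * (X * dl)" by (simp add: norm_smult_vec nLx)
      also have "\<dots> \<le> (norm z * sn / X) * (X * dl)" using na X0 dl0 by (intro mult_right_mono) auto
      also have "\<dots> = norm z * sn * dl" using X0 by simp
      finally show ?thesis .
    qed
    moreover have "norm (Lx (dg d x qd)) \<le> Mx * ((norm z * G) * bw)"
      using onx[of qd] nqd Mx0 by (meson mult_left_mono order_trans)
    moreover have "Lx (dg d x v) = p + a *s Lx (Df d f x x) + Lx (dg d x qd)"
      unfolding split1 by (simp add: Lx_def Linv_add[OF ix] LDz[unfolded Lx_def])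
    ultimately have "norm (Lx (dg d x v)) \<le> norm z + norm z * sn * dl + Mx * ((norm z * G) * bw)"
      using np by (smt (verit) norm_triangle_ineq)
    also have "\<dots> = norm z * (1 + sn * dl + bw * Mx * G)" by (simp add: algebra_simps)
    also have "\<dots> \<le> (My * norm v) * (1 + sn * dl + bw * Mx * G)"
      using nz sn0 dl0 bw0 Mx0 G0 by (intro mult_right_mono) auto
    finally show ?thesis by (simp add: ac_simps)
  qed
  have Dstep: "Mx \<le> My * (1 + sn * dl + bw * Mx * G)"
    apply (subst (1) Mx_def)
    apply (rule onorm_le)
    using C by (simp add: Lx_def)
  have E: "1 + (bw * Mx) * sqrt D * ((1 + s) ^ (D - 1) - 1)
      \<le> 1 / (1 - real D powr (3/2) / 2 * (bw * Mx) * r)\<^sup>2"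
    by (rule scalar_final[OF _ A s0 sr]) (use D2 u in \<open>simp_all add: D_def bw_def Mx_def r_def\<close>)
  have "Mx \<le> My * (1 + sn * dl + bw * Mx * G)" by (rule Dstep)
  also have "\<dots> \<le> My * (1 / (1 - real D powr (3/2) / 2 * (bw * Mx) * r)\<^sup>2 + dl * sn)"
    using E My0 by (intro mult_left_mono) (simp_all add: G_def algebra_simps)
  finally show ?thesis by (simp add: Mx_def My_def D_def bw_def r_def dl_def sn_def dP_def)
qed

theorem lemma8:
  fixes d :: "'n::finite \<Rightarrow> nat"
    and f :: "'n \<Rightarrow> ('n option \<Rightarrow> nat) \<Rightarrow> complex"
    and x y :: "complex^'n option"
  assumes "CARD('n) \<ge> 2"
    and "Max (range d) \<ge> 2"
    and "f \<in> Hd d" and "f \<noteq> (\<lambda>_ _. 0)"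
    and "x \<noteq> 0" and "y \<noteq> 0"
    and "crank (Df d f x) (hperp x) = CARD('n)"
    and "real (Max (range d)) powr (3/2) / 2 * real_of_ereal (mu d f x) * dR x y < 1"
    and "mu d f y < \<infinity>"
  shows "mu d f x \<le> mu d f y *
    ereal (1 / (1 - real (Max (range d)) powr (3/2) / 2 * real_of_ereal (mu d f x) * dR x y)\<^sup>2
           + delta d f x * dP x y)"
proof -
  have ix: "restr_invertible d f x" by (rule restr_invertible_from_crank[OF assms(5) assms(7)])
  have iy: "restr_invertible d f y"
  proof (rule ccontr)
    assume "\<not> restr_invertible d f y"
    hence "mu d f y = \<infinity>" by (simp add: mu_def)
    thus False using assms(9) by simp
  qed
  define Mx where "Mx = onorm (\<lambda>w. restr_inv d f x (dg d x w))"
  define My where "My = onorm (\<lambda>w. restr_inv d f y (dg d y w))"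
  define bw where "bw = bw_norm d f"
  have mux: "mu d f x = ereal (bw * Mx)" using ix by (simp add: mu_alt Mx_def bw_def)
  have muy: "mu d f y = ereal (bw * My)" using iy by (simp add: mu_alt My_def bw_def)
  define K where "K = 1 / (1 - real (Max (range d)) powr (3/2) / 2 * (bw * Mx) * dR x y)\<^sup>2 + delta d f x * dP x y"
  have u: "real (Max (range d)) powr (3/2) / 2 * (bw_norm d f * onorm (\<lambda>w. restr_inv d f x (dg d x w))) * dR x y < 1"
    using assms(8) by (simp add: mux Mx_def bw_def)
  have "Mx \<le> My * K"
    using main_ineq[OF assms(2) assms(5) assms(6) ix iy u] by (simp add: Mx_def My_def K_def bw_def)
  hence "bw * Mx \<le> bw * (My * K)" using bw_nonneg[of d f] by (intro mult_left_mono) (simp_all add: bw_def)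
  thus ?thesis by (simp add: mux muy K_def ac_simps)
qed

end
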